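(* Let $n\ge0$ be an integer and $n_1=\lceil n/2\rceil$. If $g\in K a(\varpi^{n_1})$, then $t(g)=\min(n_1-2l(g),-n_1)$.
   Context: $F$ is a non-archimedean local field of characteristic $0$ with ring of integers $\mathfrak{o}$, maximal ideal $\mathfrak{p}$, uniformizer $\varpi$; $U_j=\{x\in\mathfrak{o}^\times: v(x-1)\ge j\}$. $G=\mathrm{GL}_2(F)$, $K=\mathrm{GL}_2(\mathfrak{o})$, $K_1(\mathfrak{p}^n)=K\cap\begin{pmatrix}1+\mathfrak{p}^n&\mathfrak{o}\\\mathfrak{p}^n&\mathfrak{o}\end{pmatrix}$, $w=\begin{pmatrix}0&1\\-1&0\end{pmatrix}$, $a(y)=\mathrm{diag}(y,1)$, $n(x)=\begin{pmatrix}1&x\\0&1\end{pmatrix}$, $Z$ the center, $N=\{n(x)\}$. There is a disjoint decomposition $G=\bigsqcup_{t\in\mathbb{Z}}\bigsqcup_{0\le l\le n}\bigsqcup_{v\in\mathfrak{o}^\times/U_{\min(l,n-l)}}ZN a(\varpi^t)wn(\varpi^{-l}v)K_1(\mathfrak{p}^n)$; for $g\in G$, $t(g)$ and $l(g)$ are the unique integers with $0\le l(g)\le n$ and $g\in ZNa(\varpi^{t(g)})wn(\varpi^{-l(g)}v)K_1(\mathfrak{p}^n)$ for some $v\in\mathfrak{o}^\times$. *)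

theory Defs
  imports Main
begin

(* 2x2 matrices over a field: M a b c d = [[a,b],[c,d]] *)
datatype 'a m2 = M 'a 'a 'a 'a

fun mmul :: "'a::comm_ring_1 m2 \<Rightarrow> 'a m2 \<Rightarrow> 'a m2" (infixl "\<cdot>" 70) where
  "M a b c d \<cdot> M e f g h = M (a*e + b*g) (a*f + b*h) (c*e + d*g) (c*f + d*h)"

fun mdet :: "'a::comm_ring_1 m2 \<Rightarrow> 'a" where
  "mdet (M a b c d) = a*d - b*c"

(* valuation lower bound: val x \<ge> j, with the convention v(0) = +infinity *)
definition vge :: "('a::field \<Rightarrow> int) \<Rightarrow> 'a \<Rightarrow> int \<Rightarrow> bool" where
  "vge val x j \<longleftrightarrow> x = 0 \<or> val x \<ge> j"

definition nonarch_local_field :: "('a::field_char_0 \<Rightarrow> int) \<Rightarrow> 'a \<Rightarrow> bool" where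
  "nonarch_local_field val pi \<longleftrightarrow>
     (\<forall>x y. x \<noteq> 0 \<longrightarrow> y \<noteq> 0 \<longrightarrow> val (x*y) = val x + val y) \<and>
     (\<forall>x y. x \<noteq> 0 \<longrightarrow> y \<noteq> 0 \<longrightarrow> x + y \<noteq> 0 \<longrightarrow> val (x+y) \<ge> min (val x) (val y)) \<and>
     pi \<noteq> 0 \<and> val pi = 1 \<and>
     (\<forall>X::nat \<Rightarrow> 'a. (\<forall>j. \<exists>N. \<forall>p\<ge>N. \<forall>q\<ge>N. vge val (X p - X q) j)
         \<longrightarrow> (\<exists>L. \<forall>j. \<exists>N. \<forall>p\<ge>N. vge val (X p - L) j)) \<and>
     (\<exists>S. finite S \<and> (\<forall>s\<in>S. vge val s 0) \<and>
          (\<forall>x. vge val x 0 \<longrightarrow> (\<exists>s\<in>S. vge val (x - s) 1)))"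

definition ounit :: "('a::field \<Rightarrow> int) \<Rightarrow> 'a \<Rightarrow> bool" where
  "ounit val x \<longleftrightarrow> x \<noteq> 0 \<and> val x = 0"

(* K = GL_2(o) *)
definition Kmax :: "('a::field \<Rightarrow> int) \<Rightarrow> 'a m2 set" where
  "Kmax val = {M a b c d | a b c d. vge val a 0 \<and> vge val b 0 \<and> vge val c 0 \<and> vge val d 0
                 \<and> ounit val (a*d - b*c)}"

definition K1 :: "('a::field \<Rightarrow> int) \<Rightarrow> nat \<Rightarrow> 'a m2 set" where
  "K1 val n = {M a b c d | a b c d. M a b c d \<in> Kmax val \<and> vge val (a - 1) (int n) \<and> vge val c (int n)}"

definition wmat :: "'a::comm_ring_1 m2" where "wmat = M 0 1 (-1) 0"
definition amat :: "'a::comm_ring_1 \<Rightarrow> 'a m2" where "amat y = M y 0 0 1"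
definition nmat :: "'a::comm_ring_1 \<Rightarrow> 'a m2" where "nmat x = M 1 x 0 1"
definition zmat :: "'a::comm_ring_1 \<Rightarrow> 'a m2" where "zmat z = M z 0 0 z"

end

theory Submission
  imports Defs
begin

locale vf =
  fixes val :: "'a::field \<Rightarrow> int"
  assumes vm: "\<And>x y. x \<noteq> 0 \<Longrightarrow> y \<noteq> 0 \<Longrightarrow> val (x*y) = val x + val y"
    and vu: "\<And>x y. x \<noteq> 0 \<Longrightarrow> y \<noteq> 0 \<Longrightarrow> x + y \<noteq> 0 \<Longrightarrow> val (x+y) \<ge> min (val x) (val y)"
begin

lemma val1: "val 1 = 0" using vm[of 1 1] by simp

lemma valm1: "val (-1) = 0" using vm[of "-1" "-1"] val1 by simp

lemma valneg: "x \<noteq> 0 \<Longrightarrow> val (-x) = val x"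
  using vm[of "-1" x] valm1 by simp

lemma valinv: "x \<noteq> 0 \<Longrightarrow> val (inverse x) = - val x"
  using vm[of x "inverse x"] val1 by simp

lemma valpow: "x \<noteq> 0 \<Longrightarrow> val (x^k) = int k * val x"
  by (induction k) (auto simp: val1 vm algebra_simps)

lemma valpowi: "x \<noteq> 0 \<Longrightarrow> val (x powi t) = t * val x"
  by (auto simp: power_int_def valpow valinv power_inverse[symmetric])

lemma vge_add: "vge val x i \<Longrightarrow> vge val y i \<Longrightarrow> vge val (x+y) i"
  unfolding vge_def using vu[of x y] by force

lemma vge_neg: "vge val x i \<Longrightarrow> vge val (-x) i"
  unfolding vge_def using valneg[of x] by (cases "x = 0") auto

lemma vge_diff: "vge val x i \<Longrightarrow> vge val y i \<Longrightarrow> vge val (x-y) i"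
  using vge_add[of x i "-y"] vge_neg[of y i] by simp

lemma vge_mult: "vge val x i \<Longrightarrow> vge val y j \<Longrightarrow> vge val (x*y) (i+j)"
  unfolding vge_def using vm[of x y] by (cases "x = 0 \<or> y = 0") auto

lemma vge_mono: "vge val x i \<Longrightarrow> j \<le> i \<Longrightarrow> vge val x j"
  unfolding vge_def by auto

lemma vge_diff2: "vge val x i \<Longrightarrow> vge val y j \<Longrightarrow> k \<le> i \<Longrightarrow> k \<le> j \<Longrightarrow> vge val (x-y) k"
  using vge_diff vge_mono by metis

lemma vge_add2: "vge val x i \<Longrightarrow> vge val y j \<Longrightarrow> k \<le> i \<Longrightarrow> k \<le> j \<Longrightarrow> vge val (x+y) k"
  using vge_add vge_mono by metis

lemma vge_self: "vge val x (val x)" unfolding vge_def by auto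

lemma strict: assumes "x \<noteq> 0" "vge val y (val x + 1)"
  shows "x + y \<noteq> 0 \<and> val (x+y) = val x"
proof (cases "y = 0")
  case True thus ?thesis using assms by simp
next
  case False
  hence vy: "val y > val x" using assms unfolding vge_def by auto
  have ne: "x + y \<noteq> 0"
  proof
    assume "x + y = 0" hence "y = -x" by (simp add: add_eq_0_iff)
    thus False using vy valneg assms by simp
  qed
  have "val (x+y) \<ge> val x" using vu[OF assms(1) False ne] vy by simp
  moreover have "\<not> val (x+y) > val x"
  proof
    assume h: "val (x+y) > val x"
    have "val ((x+y) + (-y)) \<ge> min (val (x+y)) (val (-y))"
      using vu[of "x+y" "-y"] ne False assms by simp
    thus False using h vy valneg[OF False] by simp
  qed
  ultimately show ?thesis using ne by simp
qed

end

lemma mdet_mul: "mdet (A \<cdot> B) = mdet A * mdet B"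
  by (cases A; cases B) (simp add: algebra_simps)

theorem lemma2p3:
  fixes val :: "'a::field_char_0 \<Rightarrow> int" and \<pi> :: 'a and n :: nat and g :: "'a m2"
    and z x u :: 'a and t :: int and l :: nat and k k1 :: "'a m2"
  assumes F: "nonarch_local_field val \<pi>"
    and gK: "k \<in> Kmax val" "g = k \<cdot> amat (\<pi> ^ ((n + 1) div 2))"
    and rep: "z \<noteq> 0" "ounit val u" "l \<le> n" "k1 \<in> K1 val n"
      "g = zmat z \<cdot> nmat x \<cdot> amat (\<pi> powi t) \<cdot> wmat \<cdot> nmat (inverse (\<pi> ^ l) * u) \<cdot> k1"
  shows "t = min (int ((n + 1) div 2) - 2 * int l) (- int ((n + 1) div 2))"
proof -
  interpret vf val
    by unfold_locales (use F in \<open>auto simp: nonarch_local_field_def\<close>)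
  have pi0: "\<pi> \<noteq> 0" and vpi: "val \<pi> = 1" using F by (auto simp: nonarch_local_field_def)
  define m where "m = (n + 1) div 2"
  define y where "y = inverse (\<pi> ^ l) * u"
  define P where "P = \<pi> powi t"
  obtain p q r s where kd: "k = M p q r s" and ip: "vge val p 0" and iq: "vge val q 0"
    and ir: "vge val r 0" and is0: "vge val s 0" and dk: "ounit val (p*s - q*r)"
    using gK(1) unfolding Kmax_def by auto
  obtain a b c d where k1d: "k1 = M a b c d" and ia: "vge val a 0" and ib: "vge val b 0"
    and ic: "vge val c 0" and id0: "vge val d 0" and dk1: "ounit val (a*d - b*c)"
    and a1: "vge val (a - 1) (int n)" and cn: "vge val c (int n)"
    using rep(4) unfolding K1_def Kmax_def by auto
  define D where "D = a*d - b*c"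
  have u0: "u \<noteq> 0" and vu0: "val u = 0" using rep(2) by (auto simp: ounit_def)
  have D0: "D \<noteq> 0" and vD: "val D = 0" using dk1 by (auto simp: ounit_def D_def)
  have eq: "k \<cdot> amat (\<pi> ^ m) = zmat z \<cdot> nmat x \<cdot> amat P \<cdot> wmat \<cdot> nmat y \<cdot> k1"
    using gK(2) rep(5) by (simp add: m_def y_def P_def)
  have E1: "r * \<pi>^m = -z*(a + y*c)" and E2: "s = -z*(b + y*d)"
    using eq by (simp_all add: kd k1d amat_def zmat_def nmat_def wmat_def algebra_simps)
  have detq: "(p*s - q*r) * \<pi>^m = z*z*P*D"
    proof -
    have "mdet (k \<cdot> amat (\<pi> ^ m)) = mdet (zmat z \<cdot> nmat x \<cdot> amat P \<cdot> wmat \<cdot> nmat y \<cdot> k1)"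
      using eq by simp
    thus ?thesis by (simp only: mdet_mul) (simp add: kd k1d amat_def zmat_def nmat_def wmat_def D_def)
  qed
  have vdet: "int m = 2 * val z + t"
  proof -
    have "val ((p*s - q*r) * \<pi>^m) = int m" using dk pi0 vpi
      by (simp add: ounit_def vm valpow)
    moreover have "val (z*z*P*D) = 2 * val z + t" using rep(1) pi0 vpi D0 vD
      by (simp add: P_def vm valpowi)
    ultimately show ?thesis using detq by simp
  qed
  have yl: "\<pi>^l * y = u" using pi0 by (simp add: y_def)
  have "r*\<pi>^m*d - s*c = (-z*(a+y*c))*d - (-z*(b+y*d))*c" using E1 E2 by simp
  also have "\<dots> = -z*D" by (simp add: D_def algebra_simps)
  finally have Eq1: "r*\<pi>^m*d - s*c = -z*D" .
  have "s*a - r*\<pi>^m*b = (-z*(b+y*d))*a - (-z*(a+y*c))*b" using E1 E2 by simp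
  also have "\<dots> = -z*y*D" by (simp add: D_def algebra_simps)
  finally have "s*a - r*\<pi>^m*b = -z*y*D" .
  hence "\<pi>^l * (s*a - r*\<pi>^m*b) = \<pi>^l * (-z*y*D)" by simp
  also have "\<dots> = -z*(\<pi>^l*y)*D" by (simp add: algebra_simps)
  finally have "\<pi>^l * (s*a - r*\<pi>^m*b) = -z*(\<pi>^l*y)*D" .
  hence Eq2: "\<pi>^l * (s*a - r*\<pi>^m*b) = -z*u*D" using yl by simp
  have vzD: "val (-z*D) = val z" "-z*D \<noteq> 0" using rep(1) D0 vD by (simp_all add: vm valneg)
  have vzuD: "val (-z*u*D) = val z" "-z*u*D \<noteq> 0" using rep(1) D0 vD u0 vu0
    by (simp_all add: vm valneg)
  have vpim: "val (\<pi>^j) = int j" "\<pi>^j \<noteq> 0" for j using pi0 vpi by (simp_all add: valpow)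
  have gpim: "vge val (\<pi>^j) (int j)" for j using vpim[of j] vge_self by metis
  have unit_of: "w \<noteq> 0 \<and> val w = 0" if "vge val w 0" "\<not> vge val w 1" for w
    using that unfolding vge_def by auto
  have hu: "(s \<noteq> 0 \<and> val s = 0) \<or> (r \<noteq> 0 \<and> val r = 0)"
  proof (rule ccontr)
    assume "\<not> ?thesis"
    hence "vge val s 1" "vge val r 1" using ir is0 unfolding vge_def by auto
    hence "vge val (p*s - q*r) 1"
      by (rule vge_diff2[OF vge_mult[OF ip, of s 1] vge_mult[OF iq, of r 1]]) simp_all
    thus False using dk unfolding ounit_def vge_def by auto
  qed
  have valz: "val z = max (int l) (int m)"
  proof (cases "n = 0")
    case True
    hence m0: "m = 0" and l0: "l = 0" using rep(3) by (auto simp: m_def)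
    have yu: "y = u" using l0 by (simp add: y_def)
    have "vge val (r*\<pi>^m*d - s*c) 0"
      by (rule vge_diff2[OF vge_mult[OF vge_mult[OF ir gpim[of m]] id0] vge_mult[OF is0 ic]]) (simp_all add: m0)
    hence "vge val (-z*D) 0" using Eq1 by simp
    hence ge: "val z \<ge> 0" using vzD unfolding vge_def by auto
    have le: "val z \<le> 0"
    proof -
      have "vge val (b + u*d) 0"
        by (rule vge_add2[OF ib vge_mult[OF vge_self[of u] id0]]) (simp_all add: vu0)
      moreover have "vge val (a + u*c) 0"
        by (rule vge_add2[OF ia vge_mult[OF vge_self[of u] ic]]) (simp_all add: vu0)
      moreover have E1': "r = -z*(a+u*c)" and E2': "s = -z*(b+u*d)"
        using E1 E2 m0 yu by simp_all
      ultimately show ?thesis using hu rep(1)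
        unfolding vge_def by (auto simp: vm valneg)
    qed
    show ?thesis using ge le m0 l0 by simp
  next
    case False
    hence n1: "n \<ge> 1" and m1: "m \<ge> 1" and mn: "m \<le> n" by (auto simp: m_def)
    have ua: "a \<noteq> 0 \<and> val a = 0"
      using strict[of 1 "a - 1"] vge_mono[OF a1, of 1] n1 val1 by simp
    have ud: "d \<noteq> 0 \<and> val d = 0"
    proof (rule unit_of[OF id0], rule notI)
      assume "vge val d 1"
      hence "vge val (a*d - b*c) 1"
        by (rule vge_diff2[OF vge_mult[OF ia, of d 1] vge_mult[OF ib cn]]) (use n1 in simp_all)
      thus False using dk1 unfolding ounit_def vge_def by auto
    qed
    show ?thesis
    proof (cases "s \<noteq> 0 \<and> val s = 0")
      case True
      have sa: "s*a \<noteq> 0" "val (s*a) = 0" using True ua by (simp_all add: vm)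
      have "vge val (-(r*\<pi>^m*b)) (int m)"
        using vge_neg[OF vge_mult[OF vge_mult[OF ir gpim[of m]] ib]] by simp
      hence "s*a + -(r*\<pi>^m*b) \<noteq> 0 \<and> val (s*a + -(r*\<pi>^m*b)) = 0"
        using strict[OF sa(1)] sa(2) vge_mono m1 by (metis add_0 of_nat_1 of_nat_mono)
      hence X: "s*a - r*\<pi>^m*b \<noteq> 0" "val (s*a - r*\<pi>^m*b) = 0" by simp_all
      have "val (\<pi>^l * (s*a - r*\<pi>^m*b)) = int l" using X vpim by (simp add: vm)
      hence zl: "val z = int l" using Eq2 vzuD by simp
      have "vge val (r*\<pi>^m*d - s*c) (int m)"
        by (rule vge_diff2[OF vge_mult[OF vge_mult[OF ir gpim[of m]] id0] vge_mult[OF is0 cn]]) (use mn in simp_all)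
      hence "val z \<ge> int m" using Eq1 vzD unfolding vge_def by auto
      thus ?thesis using zl by simp
    next
      case False
      hence s1: "vge val s 1" using is0 unfolding vge_def by auto
      hence ur: "r \<noteq> 0 \<and> val r = 0" using hu False by auto
      have X1: "r*\<pi>^m*d \<noteq> 0" "val (r*\<pi>^m*d) = int m" using ur ud vpim by (simp_all add: vm)
      have "vge val (-(s*c)) (int m + 1)"
        using vge_mono[OF vge_neg[OF vge_mult[OF s1 cn]], of "int m + 1"] mn by simp
      hence "r*\<pi>^m*d + -(s*c) \<noteq> 0 \<and> val (r*\<pi>^m*d + -(s*c)) = int m"
        using strict[OF X1(1), of "-(s*c)"] X1(2) by simp
      hence zm: "val z = int m" using Eq1 vzD by simp
      have Xne: "s*a - r*\<pi>^m*b \<noteq> 0" using Eq2 vzuD by auto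
      have "vge val (s*a - r*\<pi>^m*b) 0"
        by (rule vge_diff2[OF vge_mult[OF is0 ia] vge_mult[OF vge_mult[OF ir gpim[of m]] ib]]) simp_all
      hence "val (s*a - r*\<pi>^m*b) \<ge> 0" using Xne unfolding vge_def by auto
      moreover have "val (\<pi>^l * (s*a - r*\<pi>^m*b)) = int l + val (s*a - r*\<pi>^m*b)"
        using Xne vpim by (simp add: vm)
      ultimately have "int l \<le> val z" "val z = int l + val (s*a - r*\<pi>^m*b)" using Eq2 vzuD by auto
      thus ?thesis using zm by simp
    qed
  qed
  show ?thesis using vdet valz unfolding m_def by simp
qed

end
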